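(* Under the assumptions of the preceding theorem ( $g:\mathbb{R}^n\to\mathbb{R}^s$ of class $C^2$, $D\subset\mathbb{R}^s$ closed, $\Gamma=g^{-1}(D)$, $\bar x\in\Gamma$, (A1), (A2), $\bar x^*\in\hat N_\Gamma(\bar x)$, and $\bar\lambda$ the unique vector with $\bar\lambda\in\hat N_D(g(\bar x))$, $\nabla g(\bar x)^T\bar\lambda=\bar x^*$), for every $w\in\mathbb{R}^n$, $$\hat D^*\hat N_\Gamma(\bar x,\bar x^* )(w)=\nabla^2\langle\bar\lambda,g\rangle(\bar x)w+\nabla g(\bar x)^T\,\hat D^*\hat N_D(g(\bar x),\bar\lambda)(\nabla g(\bar x)w).$$
   Context: Standing assumptions (A1), (A2) for $g:\mathbb{R}^n\to\mathbb{R}^s$ ($C^2$), closed $D\subset\mathbb{R}^s$, $\Gamma=g^{-1}(D)$, $\bar x\in\Gamma$: (A1) There exist a closed set $\Theta\subset\mathbb{R}^d$, a twice continuously differentiable mapping $h:\mathbb{R}^s\to\mathbb{R}^d$ and a neighborhood $\mathcal V$ of $g(\bar x)$ such that $\nabla h(g(\bar x))$ is surjective and $D\cap\mathcal V=\{z\in\mathcal V\mid h(z)\in\Theta\}$. (A2) $\operatorname{range}\nabla g(\bar x)+\ker\nabla h(g(\bar x))=\mathbb{R}^s$. Regular normal cone $\hat N_A(\bar a)=(T_A(\bar a))^\circ$ with $T_A(\bar a)=\limsup_{t\searrow0}(A-\bar a)/t$. For a multifunction $F:\mathbb{R}^n\rightrightarrows\mathbb{R}^z$ with $(\bar u,\bar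 v)\in\operatorname{gph}F$, the regular coderivative is $\hat D^*F(\bar u,\bar v)(v^* )=\{u^*\mid (u^*,-v^* )\in\hat N_{\operatorname{gph}F}(\bar u,\bar v)\}$. $\nabla^2\langle\lambda,g\rangle(x)$ is the Hessian of $x\mapsto\langle\lambda,g(x)\rangle$. *)

theory Defs
  imports "HOL-Analysis.Analysis"
begin

definition tangent_cone :: "'a::real_normed_vector set \<Rightarrow> 'a \<Rightarrow> 'a set" where
  "tangent_cone A a = {v. \<exists>t u. (\<forall>k. t k > (0::real)) \<and> t \<longlonglongrightarrow> 0 \<and> u \<longlonglongrightarrow> v
                                 \<and> (\<forall>k. a + t k *\<^sub>R u k \<in> A)}"

definition polar_cone :: "'a::real_inner set \<Rightarrow> 'a set" where
  "polar_cone K = {y. \<forall>v\<in>K. y \<bullet> v \<le> 0}"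

definition reg_normal_cone :: "'a::real_inner set \<Rightarrow> 'a \<Rightarrow> 'a set" where
  "reg_normal_cone A a = (if a \<in> A then polar_cone (tangent_cone A a) else {})"

definition graph_mf :: "('a \<Rightarrow> 'b set) \<Rightarrow> ('a \<times> 'b) set" where
  "graph_mf F = {(u, v). v \<in> F u}"

definition reg_coderiv ::
  "('a::euclidean_space \<Rightarrow> 'b::euclidean_space set) \<Rightarrow> 'a \<Rightarrow> 'b \<Rightarrow> 'b \<Rightarrow> 'a set" where
  "reg_coderiv F u v vs = {us. (us, - vs) \<in> reg_normal_cone (graph_mf F) (u, v)}"

text \<open>Given the second derivative D2 (a bounded bilinear map) of g at x, the vector
  \<nabla>^2<lam,g>(x) w, i.e. the gradient of u \<mapsto> <lam, D2 w u>.\<close>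
definition hess_vec :: "'b::euclidean_space \<Rightarrow> ('a::euclidean_space \<Rightarrow>\<^sub>L ('a \<Rightarrow>\<^sub>L 'b)) \<Rightarrow> 'a \<Rightarrow> 'a" where
  "hess_vec lam D2 w = (\<Sum>b\<in>Basis. (lam \<bullet> blinfun_apply (blinfun_apply D2 w) b) *\<^sub>R b)"

end

theory Submission imports Defs begin


lemma tc_evI:
  fixes a :: "'a::real_normed_vector"
  assumes t: "\<forall>k. t k > (0::real)" "t \<longlonglongrightarrow> 0" and u: "u \<longlonglongrightarrow> v"
    and ev: "eventually (\<lambda>k. a + t k *\<^sub>R u k \<in> A) sequentially"
  shows "v \<in> tangent_cone A a"
proof -
  obtain N where N: "\<And>k. k \<ge> N \<Longrightarrow> a + t k *\<^sub>R u k \<in> A"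
    using ev unfolding eventually_sequentially by blast
  have "(\<lambda>k. t (k + N)) \<longlonglongrightarrow> 0" using t(2) by (rule LIMSEQ_ignore_initial_segment)
  moreover have "(\<lambda>k. u (k + N)) \<longlonglongrightarrow> v" using u by (rule LIMSEQ_ignore_initial_segment)
  moreover have "\<forall>k. a + t (k+N) *\<^sub>R u (k+N) \<in> A" using N by simp
  ultimately show ?thesis unfolding tangent_cone_def using t(1)
    by (intro CollectI exI[of _ "\<lambda>k. t (k + N)"] exI[of _ "\<lambda>k. u (k + N)"]) simp
qed

lemma tc_zero:
  fixes a :: "'a::real_normed_vector"
  assumes "a \<in> A" shows "0 \<in> tangent_cone A a"
proof -
  have "(\<lambda>k. inverse (real (Suc k))) \<longlonglongrightarrow> 0" by (rule LIMSEQ_inverse_real_of_nat)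
  moreover have "(\<lambda>k. 0::'a) \<longlonglongrightarrow> 0" by simp
  ultimately show ?thesis unfolding tangent_cone_def using assms
    by (intro CollectI exI[of _ "\<lambda>k. inverse (real (Suc k))"] exI[of _ "\<lambda>k. 0::'a"]) simp
qed

lemma dseq:
  fixes G :: "'a::real_normed_vector \<Rightarrow> 'b::real_normed_vector"
  assumes G: "(G has_derivative G') (at y0)"
    and t: "\<forall>k. t k > (0::real)" "t \<longlonglongrightarrow> 0" and d: "d \<longlonglongrightarrow> d0"
  shows "(\<lambda>k. inverse (t k) *\<^sub>R (G (y0 + t k *\<^sub>R d k) - G y0)) \<longlonglongrightarrow> G' d0"
proof -
  have bl: "bounded_linear G'" using G by (simp add: has_derivative_at_alt)
  define q where "q k = inverse (t k) *\<^sub>R (G (y0 + t k *\<^sub>R d k) - G y0 - G' (t k *\<^sub>R d k))" for k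
  have td: "(\<lambda>k. t k *\<^sub>R d k) \<longlonglongrightarrow> 0"
    using tendsto_scaleR[OF t(2) d] by simp
  have nd: "(\<lambda>k. norm (d k)) \<longlonglongrightarrow> norm d0" using d by (rule tendsto_norm)
  have evd: "eventually (\<lambda>k. norm (d k) \<le> norm d0 + 1) sequentially"
    using order_tendstoD(2)[OF nd, of "norm d0 + 1"] by (auto elim: eventually_mono)
  have q0: "q \<longlonglongrightarrow> 0"
  proof (rule tendstoI)
    fix \<epsilon> :: real assume "\<epsilon> > 0"
    define e where "e = \<epsilon> / (2 * (norm d0 + 1))"
    have pos: "norm d0 + 1 > 0" by (simp add: add_nonneg_pos)
    have e: "e > 0" using \<open>\<epsilon> > 0\<close> pos unfolding e_def by simp
    obtain \<delta> where \<delta>: "\<delta> > 0" "\<And>y. norm (y - y0) < \<delta> \<Longrightarrow> norm (G y - G y0 - G' (y - y0)) \<le> e * norm (y - y0)"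
      using G e unfolding has_derivative_at_alt by blast
    have ev1: "eventually (\<lambda>k. norm (t k *\<^sub>R d k) < \<delta>) sequentially"
      using td \<delta>(1) by (auto simp: tendsto_iff dist_norm)
    show "eventually (\<lambda>k. dist (q k) 0 < \<epsilon>) sequentially"
      using ev1 evd
    proof eventually_elim
      case (elim k)
      have tk: "t k > 0" using t(1) by auto
      have "norm (q k) = inverse (t k) * norm (G (y0 + t k *\<^sub>R d k) - G y0 - G' (t k *\<^sub>R d k))"
        using tk by (simp add: q_def)
      also have "\<dots> \<le> inverse (t k) * (e * norm (t k *\<^sub>R d k))"
        using \<delta>(2)[of "y0 + t k *\<^sub>R d k"] elim tk by (intro mult_left_mono) auto
      also have "\<dots> = e * norm (d k)" using tk by simp
      also have "\<dots> \<le> e * (norm d0 + 1)" using elim e by (intro mult_left_mono) auto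
      also have "\<dots> = \<epsilon> / 2" using pos unfolding e_def by (simp add: field_simps)
      also have "\<dots> < \<epsilon>" using \<open>\<epsilon> > 0\<close> by simp
      finally show ?case by simp
    qed
  qed
  have "(\<lambda>k. G' (d k)) \<longlonglongrightarrow> G' d0"
    using bounded_linear.tendsto[OF bl d] .
  then have "(\<lambda>k. q k + G' (d k)) \<longlonglongrightarrow> 0 + G' d0" by (intro tendsto_add q0)
  moreover have "q k + G' (d k) = inverse (t k) *\<^sub>R (G (y0 + t k *\<^sub>R d k) - G y0)" for k
  proof -
    have tk: "t k \<noteq> 0" using t(1) by (metis less_irrefl)
    have "G' (t k *\<^sub>R d k) = t k *\<^sub>R G' (d k)" using bounded_linear.linear[OF bl] by (rule linear_scale)
    then show ?thesis using tk by (simp add: q_def scaleR_diff_right)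
  qed
  ultimately show ?thesis by simp
qed

lemma adj_sum:
  fixes B :: "'a::euclidean_space \<Rightarrow>\<^sub>L 'b::euclidean_space"
  shows "adjoint (blinfun_apply B) \<mu> = (\<Sum>b\<in>Basis. (\<mu> \<bullet> blinfun_apply B b) *\<^sub>R b)"
proof -
  have lin: "linear (blinfun_apply B)" by (simp add: bounded_linear.linear blinfun.bounded_linear_right)
  have "adjoint (blinfun_apply B) \<mu> = (\<Sum>b\<in>Basis. (adjoint (blinfun_apply B) \<mu> \<bullet> b) *\<^sub>R b)"
    by (simp add: euclidean_representation)
  also have "\<dots> = (\<Sum>b\<in>Basis. (\<mu> \<bullet> blinfun_apply B b) *\<^sub>R b)"
    using adjoint_clauses(2)[OF lin] by simp
  finally show ?thesis .
qed



lemma adj_right_inv: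
  fixes M :: "'a::euclidean_space \<Rightarrow> 'b::euclidean_space"
  assumes M: "linear M" and R: "linear R" and MR: "\<And>z. M (R z) = z"
    and y: "\<And>v. M v = 0 \<Longrightarrow> y \<bullet> v = 0"
  shows "adjoint M (adjoint R y) = y"
proof -
  have "z \<bullet> adjoint M (adjoint R y) = z \<bullet> y" for z
  proof -
    have "M (z - R (M z)) = 0" using M MR by (simp add: linear_diff)
    then have "y \<bullet> (z - R (M z)) = 0" by (rule y)
    then have e: "y \<bullet> R (M z) = y \<bullet> z" by (simp add: inner_diff_right)
    have "z \<bullet> adjoint M (adjoint R y) = M z \<bullet> adjoint R y" by (rule adjoint_clauses(1)[OF M])
    also have "\<dots> = R (M z) \<bullet> y" by (rule adjoint_clauses(1)[OF R])
    finally show ?thesis using e by (simp add: inner_commute)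
  qed
  then show ?thesis by (metis vector_eq_ldot)
qed

lemma polar_preimage:
  fixes M :: "'a::euclidean_space \<Rightarrow> 'b::euclidean_space"
  assumes M: "linear M" and R: "linear R" and MR: "\<And>z. M (R z) = z" and K: "0 \<in> K"
  shows "polar_cone (M -` K) = adjoint M ` polar_cone K"
proof
  show "adjoint M ` polar_cone K \<subseteq> polar_cone (M -` K)"
  proof
    fix y assume "y \<in> adjoint M ` polar_cone K"
    then obtain \<mu> where \<mu>: "\<mu> \<in> polar_cone K" "y = adjoint M \<mu>" by blast
    show "y \<in> polar_cone (M -` K)" unfolding polar_cone_def
    proof
      show "\<forall>v\<in>M -` K. y \<bullet> v \<le> 0"
      proof
        fix v assume "v \<in> M -` K"
        then have "\<mu> \<bullet> M v \<le> 0" using \<mu>(1) unfolding polar_cone_def by auto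
        then show "y \<bullet> v \<le> 0" using \<mu>(2) adjoint_clauses(2)[OF M] by simp
      qed
    qed
  qed
next
  show "polar_cone (M -` K) \<subseteq> adjoint M ` polar_cone K"
  proof
    fix y assume y: "y \<in> polar_cone (M -` K)"
    have y0: "y \<bullet> v = 0" if "M v = 0" for v
    proof -
      have v1: "v \<in> M -` K" "-v \<in> M -` K" using that K M by (auto simp: linear_neg)
      have "y \<bullet> v \<le> 0" using y v1(1) unfolding polar_cone_def by blast
      moreover have "y \<bullet> (-v) \<le> 0" using y v1(2) unfolding polar_cone_def by blast
      ultimately show ?thesis by (simp add: inner_minus_right)
    qed
    have eq: "adjoint M (adjoint R y) = y" by (rule adj_right_inv[OF M R MR y0])
    have "adjoint R y \<in> polar_cone K" unfolding polar_cone_def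
    proof
      show "\<forall>k\<in>K. adjoint R y \<bullet> k \<le> 0"
      proof
        fix k assume "k \<in> K"
        then have "R k \<in> M -` K" using MR by simp
        then have "y \<bullet> R k \<le> 0" using y unfolding polar_cone_def by auto
        then show "adjoint R y \<bullet> k \<le> 0" using adjoint_clauses(2)[OF R] by simp
      qed
    qed
    then show "y \<in> adjoint M ` polar_cone K" using eq by (metis image_eqI)
  qed
qed

lemma coder_formula:
  fixes L :: "'a::euclidean_space \<Rightarrow> 'c::euclidean_space"
  assumes L: "linear L" and R: "linear R" and LR: "\<And>z. L (R z) = z"
    and H: "\<And>v w. w \<bullet> H v = H w \<bullet> v"
    and T20: "(0, 0) \<in> T2"
    and T1: "T1 = {(v, H v + adjoint L \<nu>) | v \<nu>. (L v, \<nu>) \<in> T2}"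
  shows "{u. (u, -w) \<in> polar_cone T1} = {H w + adjoint L \<eta> | \<eta>. (\<eta>, - L w) \<in> polar_cone T2}"
proof -
  have key: "(u, -w) \<in> polar_cone T1 \<longleftrightarrow> (\<forall>v \<nu>. (L v, \<nu>) \<in> T2 \<longrightarrow> (u - H w) \<bullet> v - L w \<bullet> \<nu> \<le> 0)" for u
  proof -
    have "(u, -w) \<bullet> (v, H v + adjoint L \<nu>) = (u - H w) \<bullet> v - L w \<bullet> \<nu>" for v \<nu>
    proof -
      have "(u, -w) \<bullet> (v, H v + adjoint L \<nu>) = u \<bullet> v - w \<bullet> H v - w \<bullet> adjoint L \<nu>"
        by (simp add: inner_add_right)
      also have "w \<bullet> H v = H w \<bullet> v" by (rule H)
      also have "w \<bullet> adjoint L \<nu> = L w \<bullet> \<nu>" by (rule adjoint_clauses(1)[OF L])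
      finally show ?thesis by (simp add: inner_diff_left)
    qed
    note ip = this
    show ?thesis
    proof
      assume a: "(u, -w) \<in> polar_cone T1"
      show "\<forall>v \<nu>. (L v, \<nu>) \<in> T2 \<longrightarrow> (u - H w) \<bullet> v - L w \<bullet> \<nu> \<le> 0"
      proof (intro allI impI)
        fix v \<nu> assume "(L v, \<nu>) \<in> T2"
        then have "(v, H v + adjoint L \<nu>) \<in> T1" unfolding T1 by blast
        then have "(u, -w) \<bullet> (v, H v + adjoint L \<nu>) \<le> 0" using a unfolding polar_cone_def by blast
        then show "(u - H w) \<bullet> v - L w \<bullet> \<nu> \<le> 0" using ip[of v \<nu>] by linarith
      qed
    next
      assume a: "\<forall>v \<nu>. (L v, \<nu>) \<in> T2 \<longrightarrow> (u - H w) \<bullet> v - L w \<bullet> \<nu> \<le> 0"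
      show "(u, -w) \<in> polar_cone T1" unfolding polar_cone_def
      proof (intro CollectI ballI)
        fix p assume "p \<in> T1"
        then obtain v \<nu> where "p = (v, H v + adjoint L \<nu>)" "(L v, \<nu>) \<in> T2" unfolding T1 by blast
        then show "(u, -w) \<bullet> p \<le> 0" using a ip by simp
      qed
    qed
  qed
  show ?thesis
  proof (intro set_eqI iffI)
    fix u assume "u \<in> {u. (u, -w) \<in> polar_cone T1}"
    then have P: "\<And>v \<nu>. (L v, \<nu>) \<in> T2 \<Longrightarrow> (u - H w) \<bullet> v - L w \<bullet> \<nu> \<le> 0" using key by blast
    have z0: "(u - H w) \<bullet> v = 0" if "L v = 0" for v
    proof -
      have "L (-v) = 0" using that L by (simp add: linear_neg)
      then have "(u - H w) \<bullet> v \<le> 0" "(u - H w) \<bullet> (-v) \<le> 0"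
        using P[of v 0] P[of "-v" 0] T20 that by auto
      then show ?thesis by simp
    qed
    define \<eta> where "\<eta> = adjoint R (u - H w)"
    have eq: "adjoint L \<eta> = u - H w" unfolding \<eta>_def by (rule adj_right_inv[OF L R LR z0])
    have "(\<eta>, - L w) \<in> polar_cone T2" unfolding polar_cone_def
    proof (intro CollectI ballI)
      fix p assume p: "p \<in> T2"
      obtain a \<nu> where p': "p = (a, \<nu>)" by force
      have "(L (R a), \<nu>) \<in> T2" using p p' LR by simp
      then have "(u - H w) \<bullet> R a - L w \<bullet> \<nu> \<le> 0" by (rule P)
      moreover have "(u - H w) \<bullet> R a = \<eta> \<bullet> a" unfolding \<eta>_def using adjoint_clauses(2)[OF R] by simp
      ultimately show "(\<eta>, - L w) \<bullet> p \<le> 0" using p' by simp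
    qed
    moreover have "u = H w + adjoint L \<eta>" using eq by simp
    ultimately show "u \<in> {H w + adjoint L \<eta> | \<eta>. (\<eta>, - L w) \<in> polar_cone T2}" by blast
  next
    fix u assume "u \<in> {H w + adjoint L \<eta> | \<eta>. (\<eta>, - L w) \<in> polar_cone T2}"
    then obtain \<eta> where \<eta>: "(\<eta>, - L w) \<in> polar_cone T2" "u = H w + adjoint L \<eta>" by blast
    have "\<forall>v \<nu>. (L v, \<nu>) \<in> T2 \<longrightarrow> (u - H w) \<bullet> v - L w \<bullet> \<nu> \<le> 0"
    proof (intro allI impI)
      fix v \<nu> assume "(L v, \<nu>) \<in> T2"
      then have "(\<eta>, - L w) \<bullet> (L v, \<nu>) \<le> 0" using \<eta>(1) unfolding polar_cone_def by blast
      moreover have "(u - H w) \<bullet> v = \<eta> \<bullet> L v" using \<eta>(2) adjoint_clauses(2)[OF L] by simp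
      ultimately show "(u - H w) \<bullet> v - L w \<bullet> \<nu> \<le> 0" by simp
    qed
    then show "u \<in> {u. (u, -w) \<in> polar_cone T1}" using key by blast
  qed
qed



locale subm =
  fixes F :: "'a::euclidean_space \<Rightarrow> 'c::euclidean_space"
    and F' :: "'a \<Rightarrow> ('a \<Rightarrow>\<^sub>L 'c)"
    and F2 :: "'a \<Rightarrow> ('a \<Rightarrow>\<^sub>L 'c)"
    and xb :: 'a
  assumes F1: "\<And>x. (F has_derivative blinfun_apply (F' x)) (at x)"
    and F2d: "(F' has_derivative F2) (at xb)"
    and F'c: "continuous_on UNIV F'"
    and surjL: "surj (blinfun_apply (F' xb))"
begin

lemma lyusternik:
  obtains W where "open W" "xb \<in> W" "\<And>x. x \<in> W \<Longrightarrow> surj (blinfun_apply (F' x))"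
    "\<And>x v t a. x \<in> W \<Longrightarrow> \<forall>k. t k > (0::real) \<Longrightarrow> t \<longlonglongrightarrow> 0 \<Longrightarrow> a \<longlonglongrightarrow> blinfun_apply (F' x) v \<Longrightarrow>
       \<exists>xs. eventually (\<lambda>k. F (xs k) = F x + t k *\<^sub>R a k) sequentially \<and>
            (\<lambda>k. inverse (t k) *\<^sub>R (xs k - x)) \<longlonglongrightarrow> v"
proof -
  define L where "L = F' xb"
  have linL: "linear (blinfun_apply L)" by (simp add: bounded_linear.linear blinfun.bounded_linear_right)
  obtain R0 where R0: "linear R0" "blinfun_apply L \<circ> R0 = id"
    using linear_surjective_right_inverse[OF linL] surjL unfolding L_def by blast
  have LR: "blinfun_apply L (R0 z) = z" for z using R0(2) by (metis comp_apply id_apply)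
  have blR: "bounded_linear R0" using R0(1) by (simp add: linear_conv_bounded_linear)
  define Rb where "Rb = Blinfun R0"
  have Rb: "blinfun_apply Rb = R0" unfolding Rb_def using blR by (rule bounded_linear_Blinfun_apply)
  define \<Phi> where "\<Phi> x = x + R0 (F x - blinfun_apply L x)" for x
  define \<Phi>' where "\<Phi>' x = id_blinfun + (Rb o\<^sub>L (F' x - L))" for x
  have \<Phi>'_app: "blinfun_apply (\<Phi>' x) h = h + R0 (blinfun_apply (F' x) h - blinfun_apply L h)" for x h
    unfolding \<Phi>'_def by (simp add: Rb plus_blinfun.rep_eq minus_blinfun.rep_eq)
  have F_eq: "F z = blinfun_apply L (\<Phi> z)" for z
    unfolding \<Phi>_def using linL LR by (simp add: linear_add)
  have F'_eq: "blinfun_apply (F' x) h = blinfun_apply L (blinfun_apply (\<Phi>' x) h)" for x h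
    unfolding \<Phi>'_app using linL LR by (simp add: linear_add)
  have der\<Phi>: "(\<Phi> has_derivative blinfun_apply (\<Phi>' x)) (at x)" for x
  proof -
    have "((\<lambda>x. F x - blinfun_apply L x) has_derivative (\<lambda>h. blinfun_apply (F' x) h - blinfun_apply L h)) (at x)"
      by (intro derivative_intros F1 bounded_linear.has_derivative[OF blinfun.bounded_linear_right])
    then have "((\<lambda>x. R0 (F x - blinfun_apply L x)) has_derivative (\<lambda>h. R0 (blinfun_apply (F' x) h - blinfun_apply L h))) (at x)"
      by (rule bounded_linear.has_derivative[OF blR])
    then have "(\<Phi> has_derivative (\<lambda>h. h + R0 (blinfun_apply (F' x) h - blinfun_apply L h))) (at x)"
      unfolding \<Phi>_def by (intro derivative_intros)
    moreover have "(\<lambda>h. h + R0 (blinfun_apply (F' x) h - blinfun_apply L h)) = blinfun_apply (\<Phi>' x)"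
      using \<Phi>'_app by auto
    ultimately show ?thesis by simp
  qed
  have cont: "continuous_on UNIV \<Phi>'"
    unfolding \<Phi>'_def
    by (intro continuous_intros bounded_bilinear.continuous_on[OF bounded_bilinear_blinfun_compose] F'c)
  have inv0: "id_blinfun o\<^sub>L \<Phi>' xb = id_blinfun"
    unfolding \<Phi>'_def L_def by (simp add: blinfun_eqI)
  obtain U' V G G' where U': "open U'" "xb \<in> U'" and V: "open V" "\<Phi> xb \<in> V"
    and hom: "homeomorphism U' V \<Phi> G"
    and derG: "\<And>y. y \<in> V \<Longrightarrow> (G has_derivative (G' y)) (at y)"
    and G': "\<And>y. y \<in> V \<Longrightarrow> G' y = inv (blinfun_apply (\<Phi>' (G y)))"
    and bij: "\<And>y. y \<in> V \<Longrightarrow> bij (blinfun_apply (\<Phi>' (G y)))"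
    by (rule inverse_function_theorem[of UNIV \<Phi> \<Phi>' xb id_blinfun]) (use der\<Phi> cont inv0 in blast)+
  have GPhi: "\<And>x. x \<in> U' \<Longrightarrow> G (\<Phi> x) = x" and PhiU: "\<And>x. x \<in> U' \<Longrightarrow> \<Phi> x \<in> V"
    and PhiG: "\<And>y. y \<in> V \<Longrightarrow> \<Phi> (G y) = y"
    using hom unfolding homeomorphism_def by auto
  have bijx: "bij (blinfun_apply (\<Phi>' x))" if "x \<in> U'" for x
    using bij[OF PhiU[OF that]] GPhi[OF that] by simp
  show ?thesis
  proof (rule that[of U'])
    show "open U'" "xb \<in> U'" by fact+
  next
    fix x assume x: "x \<in> U'"
    show "surj (blinfun_apply (F' x))"
    proof (rule surjI)
      fix z
      show "blinfun_apply (F' x) (inv (blinfun_apply (\<Phi>' x)) (R0 z)) = z"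
        using F'_eq LR bijx[OF x] by (simp add: surj_f_inv_f bij_is_surj)
    qed
  next
    fix x v t a
    assume x: "x \<in> U'" and t: "\<forall>k. t k > (0::real)" "t \<longlonglongrightarrow> 0" and a: "a \<longlonglongrightarrow> blinfun_apply (F' x) v"
    define y0 where "y0 = \<Phi> x"
    have y0: "y0 \<in> V" "G y0 = x" using x PhiU GPhi unfolding y0_def by auto
    define d where "d k = blinfun_apply (\<Phi>' x) v + R0 (a k - blinfun_apply (F' x) v)" for k
    have "(\<lambda>k. a k - blinfun_apply (F' x) v) \<longlonglongrightarrow> 0" using a by (simp add: LIM_zero)
    then have "(\<lambda>k. R0 (a k - blinfun_apply (F' x) v)) \<longlonglongrightarrow> R0 0"
      by (rule bounded_linear.tendsto[OF blR])
    then have d: "d \<longlonglongrightarrow> blinfun_apply (\<Phi>' x) v"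
      unfolding d_def using blR by (auto intro!: tendsto_eq_intros simp: linear_0 bounded_linear.linear)
    define xs where "xs k = G (y0 + t k *\<^sub>R d k)" for k
    have "(\<lambda>k. y0 + t k *\<^sub>R d k) \<longlonglongrightarrow> y0 + 0 *\<^sub>R blinfun_apply (\<Phi>' x) v"
      by (intro tendsto_intros t d)
    then have "eventually (\<lambda>k. y0 + t k *\<^sub>R d k \<in> V) sequentially"
      using V(1) y0(1) by (simp add: topological_tendstoD)
    then have ev: "eventually (\<lambda>k. F (xs k) = F x + t k *\<^sub>R a k) sequentially"
    proof eventually_elim
      case (elim k)
      have "F (xs k) = blinfun_apply L (y0 + t k *\<^sub>R d k)"
        unfolding xs_def F_eq using PhiG[OF elim] by simp
      also have "\<dots> = blinfun_apply L y0 + t k *\<^sub>R blinfun_apply L (d k)"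
        by (simp add: blinfun.add_right blinfun.scaleR_right)
      also have "blinfun_apply L (d k) = a k"
        unfolding d_def using LR F'_eq by (simp add: blinfun.add_right)
      also have "blinfun_apply L y0 = F x" unfolding y0_def F_eq ..
      finally show ?case .
    qed
    have "(\<lambda>k. inverse (t k) *\<^sub>R (G (y0 + t k *\<^sub>R d k) - G y0)) \<longlonglongrightarrow> G' y0 (blinfun_apply (\<Phi>' x) v)"
      by (rule dseq[OF derG[OF y0(1)] t d])
    moreover have "G' y0 (blinfun_apply (\<Phi>' x) v) = v"
      using G'[OF y0(1)] y0(2) bijx[OF x] by (simp add: bij_is_inj inv_f_f)
    ultimately have "(\<lambda>k. inverse (t k) *\<^sub>R (xs k - x)) \<longlonglongrightarrow> v"
      unfolding xs_def using y0(2) by simp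
    then show "\<exists>xs. eventually (\<lambda>k. F (xs k) = F x + t k *\<^sub>R a k) sequentially \<and>
            (\<lambda>k. inverse (t k) *\<^sub>R (xs k - x)) \<longlonglongrightarrow> v" using ev by blast
  qed
qed

end


locale subm_set = subm F F' F2 xb for F :: "'a::euclidean_space \<Rightarrow> 'c::euclidean_space" and F' F2 xb +
  fixes \<Theta> :: "'c set" and A :: "'a set" and U :: "'a set"
  assumes Uo: "open U" and xbU: "xb \<in> U" and AU: "A \<inter> U = {x \<in> U. F x \<in> \<Theta>}"
begin

lemma local_props:
  obtains W where "open W" "xb \<in> W" "W \<subseteq> U" "\<And>x. x \<in> W \<Longrightarrow> surj (blinfun_apply (F' x))"
    "\<And>x. x \<in> W \<Longrightarrow> reg_normal_cone A x = adjoint (blinfun_apply (F' x)) ` reg_normal_cone \<Theta> (F x)"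
    "\<And>x v t a. x \<in> W \<Longrightarrow> \<forall>k. t k > (0::real) \<Longrightarrow> t \<longlonglongrightarrow> 0 \<Longrightarrow> a \<longlonglongrightarrow> blinfun_apply (F' x) v \<Longrightarrow>
       \<exists>xs. eventually (\<lambda>k. F (xs k) = F x + t k *\<^sub>R a k) sequentially \<and>
            (\<lambda>k. inverse (t k) *\<^sub>R (xs k - x)) \<longlonglongrightarrow> v"
proof -
  obtain W0 where W0: "open W0" "xb \<in> W0" "\<And>x. x \<in> W0 \<Longrightarrow> surj (blinfun_apply (F' x))"
    "\<And>x v t a. x \<in> W0 \<Longrightarrow> \<forall>k. t k > (0::real) \<Longrightarrow> t \<longlonglongrightarrow> 0 \<Longrightarrow> a \<longlonglongrightarrow> blinfun_apply (F' x) v \<Longrightarrow>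
       \<exists>xs. eventually (\<lambda>k. F (xs k) = F x + t k *\<^sub>R a k) sequentially \<and>
            (\<lambda>k. inverse (t k) *\<^sub>R (xs k - x)) \<longlonglongrightarrow> v"
    by (rule lyusternik) blast
  define W where "W = W0 \<inter> U"
  have tc: "tangent_cone A x = blinfun_apply (F' x) -` tangent_cone \<Theta> (F x)" if x: "x \<in> W" "x \<in> A" for x
  proof
    show "tangent_cone A x \<subseteq> blinfun_apply (F' x) -` tangent_cone \<Theta> (F x)"
    proof
      fix v assume "v \<in> tangent_cone A x"
      then obtain t u where t: "\<forall>k. t k > (0::real)" "t \<longlonglongrightarrow> 0" and u: "u \<longlonglongrightarrow> v"
        and mem: "\<forall>k. x + t k *\<^sub>R u k \<in> A" unfolding tangent_cone_def by blast
      define a where "a k = inverse (t k) *\<^sub>R (F (x + t k *\<^sub>R u k) - F x)" for k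
      have a: "a \<longlonglongrightarrow> blinfun_apply (F' x) v" unfolding a_def by (rule dseq[OF F1 t u])
      have "(\<lambda>k. x + t k *\<^sub>R u k) \<longlonglongrightarrow> x + 0 *\<^sub>R v" by (intro tendsto_intros t u)
      then have "eventually (\<lambda>k. x + t k *\<^sub>R u k \<in> U) sequentially"
        using Uo x(1) unfolding W_def by (simp add: topological_tendstoD)
      then have "eventually (\<lambda>k. F x + t k *\<^sub>R a k \<in> \<Theta>) sequentially"
      proof eventually_elim
        case (elim k)
        have "F (x + t k *\<^sub>R u k) \<in> \<Theta>" using AU elim mem by blast
        moreover have "F x + t k *\<^sub>R a k = F (x + t k *\<^sub>R u k)" using t(1)
          unfolding a_def by (simp add: less_imp_neq[symmetric])
        ultimately show ?case by simp
      qed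
      then show "v \<in> blinfun_apply (F' x) -` tangent_cone \<Theta> (F x)"
        using tc_evI[OF t a] by simp
    qed
  next
    show "blinfun_apply (F' x) -` tangent_cone \<Theta> (F x) \<subseteq> tangent_cone A x"
    proof
      fix v assume "v \<in> blinfun_apply (F' x) -` tangent_cone \<Theta> (F x)"
      then obtain t a where t: "\<forall>k. t k > (0::real)" "t \<longlonglongrightarrow> 0" and a: "a \<longlonglongrightarrow> blinfun_apply (F' x) v"
        and mem: "\<forall>k. F x + t k *\<^sub>R a k \<in> \<Theta>" unfolding tangent_cone_def by blast
      obtain xs where ev: "eventually (\<lambda>k. F (xs k) = F x + t k *\<^sub>R a k) sequentially"
        and q: "(\<lambda>k. inverse (t k) *\<^sub>R (xs k - x)) \<longlonglongrightarrow> v"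
        using W0(4)[of x t a v] x(1) t a unfolding W_def by blast
      have xs_eq: "xs k = x + t k *\<^sub>R (inverse (t k) *\<^sub>R (xs k - x))" for k
        using t(1) by (simp add: less_imp_neq[symmetric])
      have "(\<lambda>k. x + t k *\<^sub>R (inverse (t k) *\<^sub>R (xs k - x))) \<longlonglongrightarrow> x + 0 *\<^sub>R v" by (intro tendsto_intros t q)
      then have "eventually (\<lambda>k. x + t k *\<^sub>R (inverse (t k) *\<^sub>R (xs k - x)) \<in> U) sequentially"
        using Uo x(1) unfolding W_def by (simp add: topological_tendstoD)
      then have "eventually (\<lambda>k. x + t k *\<^sub>R (inverse (t k) *\<^sub>R (xs k - x)) \<in> A) sequentially"
        using ev
      proof eventually_elim
        case (elim k)
        then show ?case using AU mem xs_eq[of k] by auto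
      qed
      then show "v \<in> tangent_cone A x" by (rule tc_evI[OF t q])
    qed
  qed
  show ?thesis
  proof (rule that[of W])
    show "open W" "xb \<in> W" "W \<subseteq> U" unfolding W_def using W0 Uo xbU by auto
  next
    fix x assume "x \<in> W" then show "surj (blinfun_apply (F' x))" using W0(3) unfolding W_def by auto
  next
    fix x v t a assume "x \<in> W" "\<forall>k. t k > (0::real)" "t \<longlonglongrightarrow> 0" "a \<longlonglongrightarrow> blinfun_apply (F' x) v"
    then show "\<exists>xs. eventually (\<lambda>k. F (xs k) = F x + t k *\<^sub>R a k) sequentially \<and>
            (\<lambda>k. inverse (t k) *\<^sub>R (xs k - x)) \<longlonglongrightarrow> v" using W0(4) unfolding W_def by blast
  next
    fix x assume x: "x \<in> W"
    show "reg_normal_cone A x = adjoint (blinfun_apply (F' x)) ` reg_normal_cone \<Theta> (F x)"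
    proof (cases "x \<in> A")
      case True
      then have Fx: "F x \<in> \<Theta>" using AU x unfolding W_def by blast
      have lin: "linear (blinfun_apply (F' x))" by (simp add: bounded_linear.linear blinfun.bounded_linear_right)
      obtain R where R: "linear R" "blinfun_apply (F' x) \<circ> R = id"
        using linear_surjective_right_inverse[OF lin] W0(3) x unfolding W_def by blast
      have MR: "blinfun_apply (F' x) (R z) = z" for z using R(2) by (metis comp_apply id_apply)
      show ?thesis
        unfolding reg_normal_cone_def using True Fx tc[OF x True]
          polar_preimage[OF lin R(1) MR tc_zero[OF Fx]] by simp
    next
      case False
      then have "F x \<notin> \<Theta>" using AU x unfolding W_def by blast
      then show ?thesis using False unfolding reg_normal_cone_def by simp
    qed
  qed
qed

end


lemma tendsto_eK:
  fixes f :: "'x \<Rightarrow> 'b::metric_space"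
  assumes K: "K \<ge> 0" and ev: "\<And>e. e > 0 \<Longrightarrow> eventually (\<lambda>x. dist (f x) l \<le> e * K) F"
  shows "(f \<longlongrightarrow> l) F"
proof (rule tendstoI)
  fix \<epsilon> :: real assume \<epsilon>: "\<epsilon> > 0"
  have e: "\<epsilon> / (K + 1) > 0" using \<epsilon> K by simp
  have lt: "\<epsilon> / (K + 1) * K < \<epsilon>"
  proof -
    have "\<epsilon> / (K + 1) * K = \<epsilon> * (K / (K + 1))" by simp
    also have "K / (K + 1) < 1" using K by simp
    then have "\<epsilon> * (K / (K + 1)) < \<epsilon> * 1" using \<epsilon> by (intro mult_strict_left_mono)
    finally show ?thesis by simp
  qed
  show "eventually (\<lambda>x. dist (f x) l < \<epsilon>) F"
    using ev[OF e] by eventually_elim (use lt in linarith)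
qed

context subm begin

lemma delta_lim:
  "((\<lambda>t. (\<mu> \<bullet> (F (xb + t *\<^sub>R v + t *\<^sub>R w) - F (xb + t *\<^sub>R v) - F (xb + t *\<^sub>R w) + F xb)) / t^2)
     \<longlongrightarrow> \<mu> \<bullet> blinfun_apply (F2 v) w) (at_right 0)"
proof (rule tendsto_eK[where K = "norm \<mu> * (norm v + 2 * norm w) * norm w"])
  show "norm \<mu> * (norm v + 2 * norm w) * norm w \<ge> 0" by simp
  fix e :: real assume e: "e > 0"
  have blF2: "bounded_linear F2" using F2d by (simp add: has_derivative_at_alt)
  obtain \<delta> where \<delta>: "\<delta> > 0"
    and D: "\<And>y. norm (y - xb) < \<delta> \<Longrightarrow> norm (F' y - F' xb - F2 (y - xb)) \<le> e * norm (y - xb)"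
    using F2d e unfolding has_derivative_at_alt by blast
  define b where "b = \<delta> / (norm v + norm w + 1)"
  have nvw: "norm v + norm w + 1 > 0" by (simp add: add_nonneg_pos)
  have b: "b > 0" unfolding b_def using \<delta> nvw by simp
  show "eventually (\<lambda>t. dist ((\<mu> \<bullet> (F (xb + t *\<^sub>R v + t *\<^sub>R w) - F (xb + t *\<^sub>R v) - F (xb + t *\<^sub>R w) + F xb)) / t^2)
          (\<mu> \<bullet> blinfun_apply (F2 v) w) \<le> e * (norm \<mu> * (norm v + 2 * norm w) * norm w)) (at_right 0)"
    unfolding eventually_at_right_field
  proof (intro exI[of _ b] conjI allI impI)
    show "b > 0" by fact
    fix t :: real assume t: "0 < t" "t < b"
    have tvw: "t * (norm v + norm w) < \<delta>"
    proof -
      have "t * (norm v + norm w) \<le> t * (norm v + norm w + 1)" using t by simp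
      also have "\<dots> < b * (norm v + norm w + 1)" using t nvw by (intro mult_strict_right_mono) auto
      also have "\<dots> = \<delta>" unfolding b_def using nvw by simp
      finally show ?thesis .
    qed
    define \<psi> where "\<psi> r = \<mu> \<bullet> (F (xb + t *\<^sub>R v + r *\<^sub>R w) - F (xb + r *\<^sub>R w))" for r
    define \<psi>' where "\<psi>' r = \<mu> \<bullet> (blinfun_apply (F' (xb + t *\<^sub>R v + r *\<^sub>R w)) w - blinfun_apply (F' (xb + r *\<^sub>R w)) w)" for r
    have deriv: "(\<psi> has_real_derivative \<psi>' r) (at r)" for r
    proof -
      have d1: "((\<lambda>r. xb + t *\<^sub>R v + r *\<^sub>R w) has_derivative (\<lambda>h. h *\<^sub>R w)) (at r)"
        by (auto intro!: derivative_eq_intros)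
      have d2: "((\<lambda>r. xb + r *\<^sub>R w) has_derivative (\<lambda>h. h *\<^sub>R w)) (at r)"
        by (auto intro!: derivative_eq_intros)
      have c1: "((\<lambda>r. F (xb + t *\<^sub>R v + r *\<^sub>R w)) has_derivative (\<lambda>h. blinfun_apply (F' (xb + t *\<^sub>R v + r *\<^sub>R w)) (h *\<^sub>R w))) (at r)"
        by (rule has_derivative_compose[OF d1 F1])
      have c2: "((\<lambda>r. F (xb + r *\<^sub>R w)) has_derivative (\<lambda>h. blinfun_apply (F' (xb + r *\<^sub>R w)) (h *\<^sub>R w))) (at r)"
        by (rule has_derivative_compose[OF d2 F1])
      have "(\<psi> has_derivative (\<lambda>h. \<mu> \<bullet> (blinfun_apply (F' (xb + t *\<^sub>R v + r *\<^sub>R w)) (h *\<^sub>R w) - blinfun_apply (F' (xb + r *\<^sub>R w)) (h *\<^sub>R w)))) (at r)"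
        unfolding \<psi>_def by (intro bounded_linear.has_derivative[OF bounded_linear_inner_right] has_derivative_diff c1 c2)
      moreover have "(\<lambda>h. \<mu> \<bullet> (blinfun_apply (F' (xb + t *\<^sub>R v + r *\<^sub>R w)) (h *\<^sub>R w) - blinfun_apply (F' (xb + r *\<^sub>R w)) (h *\<^sub>R w))) = (*) (\<psi>' r)"
        unfolding \<psi>'_def by (auto simp: blinfun.scaleR_right algebra_simps)
      ultimately show ?thesis unfolding has_field_derivative_def by simp
    qed
    obtain r where r: "0 < r" "r < t" "\<psi> t - \<psi> 0 = (t - 0) * \<psi>' r"
      using MVT2[OF t(1) deriv] by blast
    have Delta: "\<mu> \<bullet> (F (xb + t *\<^sub>R v + t *\<^sub>R w) - F (xb + t *\<^sub>R v) - F (xb + t *\<^sub>R w) + F xb) = \<psi> t - \<psi> 0"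
      unfolding \<psi>_def by (simp add: inner_diff_right inner_add_right)
    define y1 where "y1 = xb + t *\<^sub>R v + r *\<^sub>R w"
    define y2 where "y2 = xb + r *\<^sub>R w"
    have n1: "norm (y1 - xb) \<le> t * (norm v + norm w)"
    proof -
      have "norm (y1 - xb) = norm (t *\<^sub>R v + r *\<^sub>R w)" unfolding y1_def by (simp add: algebra_simps)
      also have "\<dots> \<le> t * norm v + r * norm w" using t r by (auto intro: order_trans[OF norm_triangle_ineq])
      also have "\<dots> \<le> t * norm v + t * norm w" using r by (intro add_left_mono mult_right_mono) auto
      finally show ?thesis by (simp add: algebra_simps)
    qed
    have n2: "norm (y2 - xb) \<le> t * norm w"
      unfolding y2_def using r by (auto intro: mult_right_mono)
    have n2': "t * norm w \<le> t * (norm v + norm w)" using t by simp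
    have E1: "norm (F' y1 - F' xb - F2 (y1 - xb)) \<le> e * (t * (norm v + norm w))"
    proof -
      have "norm (y1 - xb) < \<delta>" using n1 tvw by linarith
      then have "norm (F' y1 - F' xb - F2 (y1 - xb)) \<le> e * norm (y1 - xb)" by (rule D)
      also have "\<dots> \<le> e * (t * (norm v + norm w))" using n1 e by (intro mult_left_mono) auto
      finally show ?thesis .
    qed
    have E2: "norm (F' y2 - F' xb - F2 (y2 - xb)) \<le> e * (t * norm w)"
    proof -
      have "norm (y2 - xb) < \<delta>" using n2 n2' tvw by linarith
      then have "norm (F' y2 - F' xb - F2 (y2 - xb)) \<le> e * norm (y2 - xb)" by (rule D)
      also have "\<dots> \<le> e * (t * norm w)" using n2 e by (intro mult_left_mono) auto
      finally show ?thesis .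
    qed
    define B where "B = F' y1 - F' y2 - t *\<^sub>R F2 v"
    have Beq: "B = (F' y1 - F' xb - F2 (y1 - xb)) - (F' y2 - F' xb - F2 (y2 - xb))"
    proof -
      have "y1 - xb = t *\<^sub>R v + (y2 - xb)" unfolding y1_def y2_def by (simp add: algebra_simps)
      then have "F2 (y1 - xb) = F2 (t *\<^sub>R v + (y2 - xb))" by (rule arg_cong)
      also have "\<dots> = t *\<^sub>R F2 v + F2 (y2 - xb)"
        using bounded_linear.linear[OF blF2] by (simp add: linear_add linear_scale)
      finally have "F2 (y1 - xb) = t *\<^sub>R F2 v + F2 (y2 - xb)" .
      then show ?thesis unfolding B_def by (simp add: algebra_simps)
    qed
    have nB: "norm B \<le> e * t * (norm v + 2 * norm w)"
    proof -
      have "norm B \<le> norm (F' y1 - F' xb - F2 (y1 - xb)) + norm (F' y2 - F' xb - F2 (y2 - xb))"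
        unfolding Beq by (rule norm_triangle_ineq4)
      also have "\<dots> \<le> e * (t * (norm v + norm w)) + e * (t * norm w)" using E1 E2 by simp
      finally show ?thesis by (simp add: algebra_simps)
    qed
    have psi'eq: "\<psi>' r - t * (\<mu> \<bullet> blinfun_apply (F2 v) w) = \<mu> \<bullet> blinfun_apply B w"
      unfolding \<psi>'_def B_def y1_def y2_def
      by (simp add: blinfun.diff_left scaleR_blinfun.rep_eq inner_diff_right)
    have "\<bar>\<mu> \<bullet> blinfun_apply B w\<bar> \<le> norm \<mu> * (norm B * norm w)"
    proof -
      have "\<bar>\<mu> \<bullet> blinfun_apply B w\<bar> \<le> norm \<mu> * norm (blinfun_apply B w)" by (rule Cauchy_Schwarz_ineq2)
      also have "\<dots> \<le> norm \<mu> * (norm B * norm w)" by (intro mult_left_mono norm_blinfun) simp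
      finally show ?thesis .
    qed
    also have "\<dots> \<le> norm \<mu> * (e * t * (norm v + 2 * norm w) * norm w)"
      using nB by (intro mult_left_mono mult_right_mono) auto
    finally have est: "\<bar>\<psi>' r - t * (\<mu> \<bullet> blinfun_apply (F2 v) w)\<bar> \<le> t * (e * (norm \<mu> * (norm v + 2 * norm w) * norm w))"
      using psi'eq by (simp add: algebra_simps)
    have "(\<psi> t - \<psi> 0) / t^2 - \<mu> \<bullet> blinfun_apply (F2 v) w = (\<psi>' r - t * (\<mu> \<bullet> blinfun_apply (F2 v) w)) / t"
      using r(3) t by (simp add: power2_eq_square field_simps)
    then have "dist ((\<psi> t - \<psi> 0) / t^2) (\<mu> \<bullet> blinfun_apply (F2 v) w) = \<bar>\<psi>' r - t * (\<mu> \<bullet> blinfun_apply (F2 v) w)\<bar> / t"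
      using t by (simp add: dist_real_def)
    also have "\<dots> \<le> e * (norm \<mu> * (norm v + 2 * norm w) * norm w)"
      using est t by (simp add: divide_le_eq mult.commute)
    finally show "dist ((\<mu> \<bullet> (F (xb + t *\<^sub>R v + t *\<^sub>R w) - F (xb + t *\<^sub>R v) - F (xb + t *\<^sub>R w) + F xb)) / t^2)
          (\<mu> \<bullet> blinfun_apply (F2 v) w) \<le> e * (norm \<mu> * (norm v + 2 * norm w) * norm w)"
      using Delta by simp
  qed
qed

lemma F2_sym: "\<mu> \<bullet> blinfun_apply (F2 v) w = \<mu> \<bullet> blinfun_apply (F2 w) v"
proof -
  have eq: "(\<lambda>t::real. (\<mu> \<bullet> (F (xb + t *\<^sub>R w + t *\<^sub>R v) - F (xb + t *\<^sub>R w) - F (xb + t *\<^sub>R v) + F xb)) / t^2)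
     = (\<lambda>t. (\<mu> \<bullet> (F (xb + t *\<^sub>R v + t *\<^sub>R w) - F (xb + t *\<^sub>R v) - F (xb + t *\<^sub>R w) + F xb)) / t^2)"
  proof (rule ext)
    fix t :: real
    have hh: "xb + t *\<^sub>R w + t *\<^sub>R v = xb + t *\<^sub>R v + t *\<^sub>R w" by (simp add: add_ac)
    show "(\<mu> \<bullet> (F (xb + t *\<^sub>R w + t *\<^sub>R v) - F (xb + t *\<^sub>R w) - F (xb + t *\<^sub>R v) + F xb)) / t^2
     = (\<mu> \<bullet> (F (xb + t *\<^sub>R v + t *\<^sub>R w) - F (xb + t *\<^sub>R v) - F (xb + t *\<^sub>R w) + F xb)) / t^2"
      unfolding hh by (simp add: algebra_simps)
  qed
  have l2: "((\<lambda>t. (\<mu> \<bullet> (F (xb + t *\<^sub>R v + t *\<^sub>R w) - F (xb + t *\<^sub>R v) - F (xb + t *\<^sub>R w) + F xb)) / t^2)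
     \<longlongrightarrow> \<mu> \<bullet> blinfun_apply (F2 w) v) (at_right 0)"
    using delta_lim[of \<mu> w v] unfolding eq .
  show ?thesis by (rule tendsto_unique[OF trivial_limit_at_right_real delta_lim l2])
qed

end


lemma lin_blinfun: "linear (blinfun_apply B)"
  by (simp add: bounded_linear.linear blinfun.bounded_linear_right)

lemma adj_diff_blinfun:
  fixes B1 B2 :: "'a::euclidean_space \<Rightarrow>\<^sub>L 'b::euclidean_space"
  shows "adjoint (blinfun_apply (B1 - B2)) m = adjoint (blinfun_apply B1) m - adjoint (blinfun_apply B2) m"
proof -
  have "z \<bullet> adjoint (blinfun_apply (B1 - B2)) m = z \<bullet> (adjoint (blinfun_apply B1) m - adjoint (blinfun_apply B2) m)" for z
    by (simp add: adjoint_clauses(1)[OF lin_blinfun] inner_diff_right blinfun.diff_left inner_diff_left)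
  then show ?thesis by (metis vector_eq_ldot)
qed

lemma adj_scale_blinfun:
  fixes B :: "'a::euclidean_space \<Rightarrow>\<^sub>L 'b::euclidean_space"
  shows "adjoint (blinfun_apply (c *\<^sub>R B)) m = c *\<^sub>R adjoint (blinfun_apply B) m"
proof -
  have "z \<bullet> adjoint (blinfun_apply (c *\<^sub>R B)) m = z \<bullet> (c *\<^sub>R adjoint (blinfun_apply B) m)" for z
  proof -
    have "z \<bullet> adjoint (blinfun_apply (c *\<^sub>R B)) m = blinfun_apply (c *\<^sub>R B) z \<bullet> m"
      by (rule adjoint_clauses(1)[OF lin_blinfun])
    moreover have "z \<bullet> adjoint (blinfun_apply B) m = blinfun_apply B z \<bullet> m"
      by (rule adjoint_clauses(1)[OF lin_blinfun])
    ultimately show ?thesis by (simp add: scaleR_blinfun.rep_eq)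
  qed
  then show ?thesis by (metis vector_eq_ldot)
qed

lemma lin_adj: "linear (adjoint (blinfun_apply (B :: 'a::euclidean_space \<Rightarrow>\<^sub>L 'b::euclidean_space)))"
  by (rule adjoint_linear[OF lin_blinfun])

lemma adj_norm:
  fixes B :: "'a::euclidean_space \<Rightarrow>\<^sub>L 'b::euclidean_space"
  shows "norm (adjoint (blinfun_apply B) m) \<le> norm B * norm m"
proof -
  define z where "z = adjoint (blinfun_apply B) m"
  have "norm z ^ 2 = blinfun_apply B z \<bullet> m"
    unfolding z_def by (simp add: power2_norm_eq_inner adjoint_clauses(1)[OF lin_blinfun])
  also have "\<dots> \<le> norm (blinfun_apply B z) * norm m" by (rule norm_cauchy_schwarz)
  also have "\<dots> \<le> norm B * norm z * norm m" by (intro mult_right_mono norm_blinfun) simp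
  finally have "norm z * norm z \<le> (norm B * norm m) * norm z" by (simp add: power2_eq_square algebra_simps)
  then show ?thesis unfolding z_def[symmetric]
    by (cases "norm z = 0") (auto simp: mult_le_cancel_right)
qed

lemma adj_tendsto:
  fixes B :: "'x \<Rightarrow> ('a::euclidean_space \<Rightarrow>\<^sub>L 'b::euclidean_space)"
  assumes "(B \<longlongrightarrow> B0) F" "(m \<longlongrightarrow> m0) F"
  shows "((\<lambda>k. adjoint (blinfun_apply (B k)) (m k)) \<longlongrightarrow> adjoint (blinfun_apply B0) m0) F"
  unfolding adj_sum by (intro tendsto_intros blinfun.tendsto assms)

lemma adj_left_inv:
  fixes M :: "'a::euclidean_space \<Rightarrow> 'b::euclidean_space"
  assumes M: "linear M" and R: "linear R" and MR: "\<And>z. M (R z) = z"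
  shows "adjoint R (adjoint M m) = m"
proof -
  have "z \<bullet> adjoint R (adjoint M m) = z \<bullet> m" for z
    using adjoint_clauses(1)[OF R] adjoint_clauses(1)[OF M] MR by simp
  then show ?thesis by (metis vector_eq_ldot)
qed



context subm_set begin

lemma tg_sup:
  assumes W: "open W" "xb \<in> W" "W \<subseteq> U"
    and ncW: "\<And>x. x \<in> W \<Longrightarrow> reg_normal_cone A x = adjoint (blinfun_apply (F' x)) ` reg_normal_cone \<Theta> (F x)"
    and lyW: "\<And>x v t a. x \<in> W \<Longrightarrow> \<forall>k. t k > (0::real) \<Longrightarrow> t \<longlonglongrightarrow> 0 \<Longrightarrow> a \<longlonglongrightarrow> blinfun_apply (F' x) v \<Longrightarrow>
       \<exists>xs. eventually (\<lambda>k. F (xs k) = F x + t k *\<^sub>R a k) sequentially \<and>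
            (\<lambda>k. inverse (t k) *\<^sub>R (xs k - x)) \<longlonglongrightarrow> v"
    and T2: "(blinfun_apply (F' xb) v, \<nu>) \<in> tangent_cone (graph_mf (reg_normal_cone \<Theta>)) (F xb, \<mu>b)"
  shows "(v, adjoint (blinfun_apply (F2 v)) \<mu>b + adjoint (blinfun_apply (F' xb)) \<nu>)
           \<in> tangent_cone (graph_mf (reg_normal_cone A)) (xb, adjoint (blinfun_apply (F' xb)) \<mu>b)"
proof -
  define L where "L = F' xb"
  define xs0 where "xs0 = adjoint (blinfun_apply L) \<mu>b"
  have cont: "isCont F' xb" using F'c by (simp add: continuous_on_eq_continuous_at)
  obtain t u where t: "\<forall>k. t k > (0::real)" "t \<longlonglongrightarrow> 0" and u: "u \<longlonglongrightarrow> (blinfun_apply L v, \<nu>)"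
    and umem: "\<forall>k. (F xb, \<mu>b) + t k *\<^sub>R u k \<in> graph_mf (reg_normal_cone \<Theta>)"
    using T2 unfolding tangent_cone_def L_def by blast
  define a where "a k = fst (u k)" for k
  define b where "b k = snd (u k)" for k
  have a: "a \<longlonglongrightarrow> blinfun_apply L v" unfolding a_def using tendsto_fst[OF u] by simp
  have b: "b \<longlonglongrightarrow> \<nu>" unfolding b_def using tendsto_snd[OF u] by simp
  have mem: "\<mu>b + t k *\<^sub>R b k \<in> reg_normal_cone \<Theta> (F xb + t k *\<^sub>R a k)" for k
    using umem[rule_format, of k] unfolding a_def b_def graph_mf_def by (cases "u k") auto
  obtain xs where evF: "eventually (\<lambda>k. F (xs k) = F xb + t k *\<^sub>R a k) sequentially"
    and q: "(\<lambda>k. inverse (t k) *\<^sub>R (xs k - xb)) \<longlonglongrightarrow> v"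
    using lyW[OF W(2) t a[unfolded L_def]] by blast
  define q where "q k = inverse (t k) *\<^sub>R (xs k - xb)" for k
  have tnz: "t k \<noteq> 0" for k using t(1) by (metis less_irrefl)
  have xs_eq: "xs k = xb + t k *\<^sub>R q k" for k unfolding q_def using tnz[of k] by simp
  have ql: "q \<longlonglongrightarrow> v" using q unfolding q_def .
  have "(\<lambda>k. xb + t k *\<^sub>R q k) \<longlonglongrightarrow> xb + 0 *\<^sub>R v" by (intro tendsto_intros t ql)
  moreover have xsf: "xs = (\<lambda>k. xb + t k *\<^sub>R q k)" using xs_eq by (intro ext)
  ultimately have xsl: "xs \<longlonglongrightarrow> xb" by simp
  have evW: "eventually (\<lambda>k. xs k \<in> W) sequentially" using xsl W(1,2) by (rule topological_tendstoD)
  define Q where "Q k = inverse (t k) *\<^sub>R (F' (xs k) - L)" for k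
  have Ql: "Q \<longlonglongrightarrow> F2 v"
    using dseq[OF F2d t ql] unfolding Q_def L_def xs_eq[symmetric] .
  have F'l: "(\<lambda>k. F' (xs k)) \<longlonglongrightarrow> L" unfolding L_def by (rule isCont_tendsto_compose[OF cont xsl])
  define y where "y k = adjoint (blinfun_apply (Q k)) \<mu>b + adjoint (blinfun_apply (F' (xs k))) (b k)" for k
  have yl: "y \<longlonglongrightarrow> adjoint (blinfun_apply (F2 v)) \<mu>b + adjoint (blinfun_apply L) \<nu>"
    unfolding y_def by (intro tendsto_add adj_tendsto Ql F'l b tendsto_const)
  have yid: "xs0 + t k *\<^sub>R y k = adjoint (blinfun_apply (F' (xs k))) (\<mu>b + t k *\<^sub>R b k)" for k
  proof -
    have "t k *\<^sub>R Q k = F' (xs k) - L" unfolding Q_def using tnz[of k] by simp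
    then have "t k *\<^sub>R adjoint (blinfun_apply (Q k)) \<mu>b = adjoint (blinfun_apply (F' (xs k))) \<mu>b - xs0"
      unfolding xs0_def by (metis adj_scale_blinfun adj_diff_blinfun)
    moreover have "adjoint (blinfun_apply (F' (xs k))) (\<mu>b + t k *\<^sub>R b k)
        = adjoint (blinfun_apply (F' (xs k))) \<mu>b + t k *\<^sub>R adjoint (blinfun_apply (F' (xs k))) (b k)"
      by (simp add: linear_add[OF lin_adj] linear_scale[OF lin_adj])
    ultimately show ?thesis unfolding y_def by (simp add: scaleR_add_right)
  qed
  have "eventually (\<lambda>k. (xb, xs0) + t k *\<^sub>R (q k, y k) \<in> graph_mf (reg_normal_cone A)) sequentially"
    using evW evF
  proof eventually_elim
    case (elim k)
    have "adjoint (blinfun_apply (F' (xs k))) (\<mu>b + t k *\<^sub>R b k) \<in> reg_normal_cone A (xs k)"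
      using ncW[OF elim(1)] mem[of k] elim(2) by simp
    then show ?case unfolding graph_mf_def using xs_eq[of k] yid[of k] by simp
  qed
  from tc_evI[OF t tendsto_Pair[OF ql yl] this] show ?thesis unfolding xs0_def L_def .
qed

end


context subm_set begin

lemma tg_sub:
  assumes W: "open W" "xb \<in> W" "W \<subseteq> U"
    and ncW: "\<And>x. x \<in> W \<Longrightarrow> reg_normal_cone A x = adjoint (blinfun_apply (F' x)) ` reg_normal_cone \<Theta> (F x)"
    and P: "(v, y) \<in> tangent_cone (graph_mf (reg_normal_cone A)) (xb, adjoint (blinfun_apply (F' xb)) \<mu>b)"
  shows "\<exists>\<nu>. y = adjoint (blinfun_apply (F2 v)) \<mu>b + adjoint (blinfun_apply (F' xb)) \<nu> \<and>
      (blinfun_apply (F' xb) v, \<nu>) \<in> tangent_cone (graph_mf (reg_normal_cone \<Theta>)) (F xb, \<mu>b)"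
proof -
  define L where "L = F' xb"
  define xs0 where "xs0 = adjoint (blinfun_apply L) \<mu>b"
  have cont: "isCont F' xb" using F'c by (simp add: continuous_on_eq_continuous_at)
  obtain t u where t: "\<forall>k. t k > (0::real)" "t \<longlonglongrightarrow> 0" and u: "u \<longlonglongrightarrow> (v, y)"
    and umem: "\<forall>k. (xb, xs0) + t k *\<^sub>R u k \<in> graph_mf (reg_normal_cone A)"
    using P unfolding tangent_cone_def L_def xs0_def by blast
  define vk where "vk k = fst (u k)" for k
  define yk where "yk k = snd (u k)" for k
  have vl: "vk \<longlonglongrightarrow> v" unfolding vk_def using tendsto_fst[OF u] by simp
  have yl: "yk \<longlonglongrightarrow> y" unfolding yk_def using tendsto_snd[OF u] by simp
  define x where "x k = xb + t k *\<^sub>R vk k" for k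
  have mem: "xs0 + t k *\<^sub>R yk k \<in> reg_normal_cone A (x k)" for k
    using umem[rule_format, of k] unfolding x_def vk_def yk_def graph_mf_def by (cases "u k") auto
  have tnz: "t k \<noteq> 0" for k using t(1) by (metis less_irrefl)
  have "(\<lambda>k. xb + t k *\<^sub>R vk k) \<longlonglongrightarrow> xb + 0 *\<^sub>R v" by (intro tendsto_intros t vl)
  then have xl: "x \<longlonglongrightarrow> xb" unfolding x_def by simp
  have evW: "eventually (\<lambda>k. x k \<in> W) sequentially" using xl W(1,2) by (rule topological_tendstoD)
  define PP where "PP k \<mu> = (\<mu> \<in> reg_normal_cone \<Theta> (F (x k)) \<and> xs0 + t k *\<^sub>R yk k = adjoint (blinfun_apply (F' (x k))) \<mu>)" for k \<mu>
  define \<mu>s where "\<mu>s k = (SOME \<mu>. PP k \<mu>)" for k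
  have ev\<mu>: "eventually (\<lambda>k. PP k (\<mu>s k)) sequentially"
    using evW
  proof eventually_elim
    case (elim k)
    have "\<exists>\<mu>. PP k \<mu>" using mem[of k] ncW[OF elim] unfolding PP_def by auto
    then show ?case unfolding \<mu>s_def by (rule someI_ex)
  qed
  have linL: "linear (blinfun_apply L)" by (rule lin_blinfun)
  obtain R where R: "linear R" "blinfun_apply L \<circ> R = id"
    using linear_surjective_right_inverse[OF linL] surjL unfolding L_def by blast
  have LR: "blinfun_apply L (R z) = z" for z using R(2) by (metis comp_apply id_apply)
  define N where "N = adjoint R"
  have linN: "linear N" unfolding N_def by (rule adjoint_linear[OF R(1)])
  have blN: "bounded_linear N" using linN by (simp add: linear_conv_bounded_linear)
  have Nleft: "N (adjoint (blinfun_apply L) m) = m" for m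
    unfolding N_def by (rule adj_left_inv[OF linL R(1) LR])
  obtain K where K: "K > 0" "\<And>z. norm (N z) \<le> norm z * K"
    using bounded_linear.pos_bounded[OF blN] by blast
  have iden0: "eventually (\<lambda>k. adjoint (blinfun_apply L) (\<mu>s k - \<mu>b)
      = t k *\<^sub>R yk k - adjoint (blinfun_apply (F' (x k) - L)) (\<mu>s k)) sequentially"
    using ev\<mu>
  proof eventually_elim
    case (elim k)
    then have e: "xs0 + t k *\<^sub>R yk k = adjoint (blinfun_apply (F' (x k))) (\<mu>s k)" unfolding PP_def by blast
    have "adjoint (blinfun_apply L) (\<mu>s k - \<mu>b) = adjoint (blinfun_apply L) (\<mu>s k) - xs0"
      unfolding xs0_def by (simp add: linear_diff[OF lin_adj])
    also have "\<dots> = t k *\<^sub>R yk k - adjoint (blinfun_apply (F' (x k) - L)) (\<mu>s k)"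
      using e by (simp add: adj_diff_blinfun algebra_simps)
    finally show ?case .
  qed
  have iden: "eventually (\<lambda>k. \<mu>s k - \<mu>b = N (t k *\<^sub>R yk k) - N (adjoint (blinfun_apply (F' (x k) - L)) (\<mu>s k))) sequentially"
    using iden0
  proof eventually_elim
    case (elim k)
    have "\<mu>s k - \<mu>b = N (adjoint (blinfun_apply L) (\<mu>s k - \<mu>b))" by (simp add: Nleft)
    also have "\<dots> = N (t k *\<^sub>R yk k) - N (adjoint (blinfun_apply (F' (x k) - L)) (\<mu>s k))"
      using elim by (simp add: linear_diff[OF linN])
    finally show ?case .
  qed
  define e where "e k = norm (F' (x k) - L)" for k
  have "(\<lambda>k. F' (x k)) \<longlonglongrightarrow> L" unfolding L_def by (rule isCont_tendsto_compose[OF cont xl])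
  then have "(\<lambda>k. F' (x k) - L) \<longlonglongrightarrow> 0" by (simp add: LIM_zero)
  then have el: "e \<longlonglongrightarrow> 0" unfolding e_def using tendsto_norm_zero by blast
  have "(\<lambda>k. K * e k) \<longlonglongrightarrow> K * 0" by (intro tendsto_intros el)
  then have evhalf: "eventually (\<lambda>k. K * e k < 1/2) sequentially"
    using order_tendstoD(2)[of "\<lambda>k. K * e k" "K * 0" sequentially "1/2"] by simp
  have bound: "eventually (\<lambda>k. norm (\<mu>s k - \<mu>b) \<le> 2 * K * (t k * norm (yk k)) + 2 * (K * e k) * norm \<mu>b) sequentially"
    using iden evhalf
  proof eventually_elim
    case (elim k)
    define d where "d = norm (\<mu>s k - \<mu>b)"
    define c where "c = K * e k"
    have c0: "c \<ge> 0" unfolding c_def e_def using K by simp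
    have t0: "t k > 0" using t(1) by simp
    have "d \<le> norm (N (t k *\<^sub>R yk k)) + norm (N (adjoint (blinfun_apply (F' (x k) - L)) (\<mu>s k)))"
      unfolding d_def elim(1) by (rule norm_triangle_ineq4)
    also have "\<dots> \<le> norm (t k *\<^sub>R yk k) * K + norm (adjoint (blinfun_apply (F' (x k) - L)) (\<mu>s k)) * K"
      by (intro add_mono K(2))
    also have "norm (adjoint (blinfun_apply (F' (x k) - L)) (\<mu>s k)) * K \<le> (e k * norm (\<mu>s k)) * K"
      unfolding e_def using K by (intro mult_right_mono adj_norm) auto
    also have "norm (\<mu>s k) \<le> d + norm \<mu>b" unfolding d_def using norm_triangle_ineq[of "\<mu>s k - \<mu>b" \<mu>b] by simp
    then have "(e k * norm (\<mu>s k)) * K \<le> (e k * (d + norm \<mu>b)) * K"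
      unfolding e_def using K by (intro mult_right_mono mult_left_mono) auto
    finally have "d \<le> K * (t k * norm (yk k)) + c * d + c * norm \<mu>b"
      using t0 unfolding c_def by (simp add: algebra_simps)
    moreover have "c * d \<le> (1/2) * d"
      using elim(2) unfolding c_def d_def by (intro mult_right_mono) auto
    ultimately have "d \<le> 2 * (K * (t k * norm (yk k))) + 2 * c * norm \<mu>b" by linarith
    then show ?case unfolding d_def c_def by (simp add: algebra_simps)
  qed
  have "(\<lambda>k. 2 * K * (t k * norm (yk k)) + 2 * (K * e k) * norm \<mu>b) \<longlonglongrightarrow> 2 * K * (0 * norm y) + 2 * (K * 0) * norm \<mu>b"
    by (intro tendsto_intros t el yl)
  then have g0: "(\<lambda>k. 2 * K * (t k * norm (yk k)) + 2 * (K * e k) * norm \<mu>b) \<longlonglongrightarrow> 0" by simp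
  have "(\<lambda>k. \<mu>s k - \<mu>b) \<longlonglongrightarrow> 0" by (rule Lim_null_comparison[OF bound g0])
  then have \<mu>l: "\<mu>s \<longlonglongrightarrow> \<mu>b" by (simp add: LIM_zero_iff)
  define Q where "Q k = inverse (t k) *\<^sub>R (F' (x k) - L)" for k
  have Ql: "Q \<longlonglongrightarrow> F2 v" using dseq[OF F2d t vl] unfolding Q_def L_def x_def .
  define \<nu> where "\<nu> k = inverse (t k) *\<^sub>R (\<mu>s k - \<mu>b)" for k
  define \<nu>0 where "\<nu>0 = N y - N (adjoint (blinfun_apply (F2 v)) \<mu>b)"
  have ev\<nu>: "eventually (\<lambda>k. N (yk k) - N (adjoint (blinfun_apply (Q k)) (\<mu>s k)) = \<nu> k) sequentially"
    using iden
  proof eventually_elim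
    case (elim k)
    have "\<nu> k = inverse (t k) *\<^sub>R (N (t k *\<^sub>R yk k) - N (adjoint (blinfun_apply (F' (x k) - L)) (\<mu>s k)))"
      unfolding \<nu>_def elim ..
    also have "\<dots> = N (yk k) - N (adjoint (blinfun_apply (Q k)) (\<mu>s k))"
      unfolding Q_def adj_scale_blinfun using tnz[of k]
      by (simp add: linear_scale[OF linN] linear_diff[OF linN] scaleR_diff_right)
    finally show ?case by simp
  qed
  have "(\<lambda>k. N (yk k) - N (adjoint (blinfun_apply (Q k)) (\<mu>s k))) \<longlonglongrightarrow> \<nu>0"
    unfolding \<nu>0_def by (intro tendsto_diff bounded_linear.tendsto[OF blN] yl adj_tendsto Ql \<mu>l)
  then have \<nu>l: "\<nu> \<longlonglongrightarrow> \<nu>0" using ev\<nu> by (rule Lim_transform_eventually)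
  define a where "a k = inverse (t k) *\<^sub>R (F (xb + t k *\<^sub>R vk k) - F xb)" for k
  have al: "a \<longlonglongrightarrow> blinfun_apply L v" unfolding a_def L_def by (rule dseq[OF F1 t vl])
  have "eventually (\<lambda>k. (F xb, \<mu>b) + t k *\<^sub>R (a k, \<nu> k) \<in> graph_mf (reg_normal_cone \<Theta>)) sequentially"
    using ev\<mu>
  proof eventually_elim
    case (elim k)
    then have "\<mu>s k \<in> reg_normal_cone \<Theta> (F (x k))" unfolding PP_def by blast
    then show ?case unfolding graph_mf_def a_def \<nu>_def x_def using tnz[of k] by simp
  qed
  from tc_evI[OF t tendsto_Pair[OF al \<nu>l] this]
  have T2: "(blinfun_apply L v, \<nu>0) \<in> tangent_cone (graph_mf (reg_normal_cone \<Theta>)) (F xb, \<mu>b)" .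
  have blA: "bounded_linear (adjoint (blinfun_apply L))" using lin_adj by (simp add: linear_conv_bounded_linear)
  have ev2: "eventually (\<lambda>k. yk k - adjoint (blinfun_apply (Q k)) (\<mu>s k) = adjoint (blinfun_apply L) (\<nu> k)) sequentially"
    using iden0
  proof eventually_elim
    case (elim k)
    have "adjoint (blinfun_apply L) (\<nu> k) = inverse (t k) *\<^sub>R adjoint (blinfun_apply L) (\<mu>s k - \<mu>b)"
      unfolding \<nu>_def by (simp add: linear_scale[OF lin_adj])
    also have "\<dots> = yk k - adjoint (blinfun_apply (Q k)) (\<mu>s k)"
      unfolding elim Q_def adj_scale_blinfun using tnz[of k] by (simp add: scaleR_diff_right)
    finally show ?case by simp
  qed
  have "(\<lambda>k. yk k - adjoint (blinfun_apply (Q k)) (\<mu>s k)) \<longlonglongrightarrow> y - adjoint (blinfun_apply (F2 v)) \<mu>b"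
    by (intro tendsto_diff yl adj_tendsto Ql \<mu>l)
  then have l1: "(\<lambda>k. adjoint (blinfun_apply L) (\<nu> k)) \<longlonglongrightarrow> y - adjoint (blinfun_apply (F2 v)) \<mu>b"
    using ev2 by (rule Lim_transform_eventually)
  have l2: "(\<lambda>k. adjoint (blinfun_apply L) (\<nu> k)) \<longlonglongrightarrow> adjoint (blinfun_apply L) \<nu>0"
    by (rule bounded_linear.tendsto[OF blA \<nu>l])
  have "adjoint (blinfun_apply L) \<nu>0 = y - adjoint (blinfun_apply (F2 v)) \<mu>b"
    using tendsto_unique[OF trivial_limit_sequentially l2 l1] .
  then have "y = adjoint (blinfun_apply (F2 v)) \<mu>b + adjoint (blinfun_apply L) \<nu>0" by simp
  then show ?thesis using T2 unfolding L_def by blast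
qed

end


context subm_set begin

theorem sub_coderiv:
  assumes mu: "\<mu>b \<in> reg_normal_cone \<Theta> (F xb)"
  shows "reg_coderiv (reg_normal_cone A) xb (adjoint (blinfun_apply (F' xb)) \<mu>b) w
    = {adjoint (blinfun_apply (F2 w)) \<mu>b + adjoint (blinfun_apply (F' xb)) \<eta> | \<eta>.
         \<eta> \<in> reg_coderiv (reg_normal_cone \<Theta>) (F xb) \<mu>b (blinfun_apply (F' xb) w)}"
proof -
  obtain W where W: "open W" "xb \<in> W" "W \<subseteq> U"
    and ncW: "\<And>x. x \<in> W \<Longrightarrow> reg_normal_cone A x = adjoint (blinfun_apply (F' x)) ` reg_normal_cone \<Theta> (F x)"
    and lyW: "\<And>x v t a. x \<in> W \<Longrightarrow> \<forall>k. t k > (0::real) \<Longrightarrow> t \<longlonglongrightarrow> 0 \<Longrightarrow> a \<longlonglongrightarrow> blinfun_apply (F' x) v \<Longrightarrow>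
       \<exists>xs. eventually (\<lambda>k. F (xs k) = F x + t k *\<^sub>R a k) sequentially \<and>
            (\<lambda>k. inverse (t k) *\<^sub>R (xs k - x)) \<longlonglongrightarrow> v"
    by (rule local_props) blast
  define L where "L = blinfun_apply (F' xb)"
  define xs0 where "xs0 = adjoint L \<mu>b"
  define H where "H v = adjoint (blinfun_apply (F2 v)) \<mu>b" for v
  define T1 where "T1 = tangent_cone (graph_mf (reg_normal_cone A)) (xb, xs0)"
  define T2 where "T2 = tangent_cone (graph_mf (reg_normal_cone \<Theta>)) (F xb, \<mu>b)"
  have FT: "F xb \<in> \<Theta>" using mu unfolding reg_normal_cone_def by (auto split: if_splits)
  have in1: "(xb, xs0) \<in> graph_mf (reg_normal_cone A)"
    unfolding graph_mf_def xs0_def L_def using ncW[OF W(2)] mu by auto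
  have in2: "(F xb, \<mu>b) \<in> graph_mf (reg_normal_cone \<Theta>)" unfolding graph_mf_def using mu by simp
  have T1eq: "T1 = {(v, H v + adjoint L \<nu>) | v \<nu>. (L v, \<nu>) \<in> T2}"
  proof
    show "T1 \<subseteq> {(v, H v + adjoint L \<nu>) | v \<nu>. (L v, \<nu>) \<in> T2}"
    proof
      fix p assume p: "p \<in> T1"
      obtain v y where vy: "p = (v, y)" by force
      from tg_sub[OF W ncW, of v y \<mu>b] p vy
      show "p \<in> {(v, H v + adjoint L \<nu>) | v \<nu>. (L v, \<nu>) \<in> T2}"
        unfolding T1_def T2_def H_def L_def xs0_def by auto
    qed
  next
    show "{(v, H v + adjoint L \<nu>) | v \<nu>. (L v, \<nu>) \<in> T2} \<subseteq> T1"
      using tg_sup[OF W ncW lyW] unfolding T1_def T2_def H_def L_def xs0_def by blast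
  qed
  have linL: "linear L" unfolding L_def by (rule lin_blinfun)
  obtain R where R: "linear R" "L \<circ> R = id"
    using linear_surjective_right_inverse[OF linL] surjL unfolding L_def by blast
  have LR: "L (R z) = z" for z using R(2) by (metis comp_apply id_apply)
  have Hsym: "w \<bullet> H v = H w \<bullet> v" for v w
  proof -
    have "w \<bullet> H v = blinfun_apply (F2 v) w \<bullet> \<mu>b" unfolding H_def by (rule adjoint_clauses(1)[OF lin_blinfun])
    also have "\<dots> = \<mu>b \<bullet> blinfun_apply (F2 w) v" using F2_sym[of \<mu>b v w] by (simp add: inner_commute)
    also have "\<dots> = H w \<bullet> v" unfolding H_def by (rule adjoint_clauses(2)[OF lin_blinfun, symmetric])
    finally show ?thesis .
  qed
  have T20: "(0, 0) \<in> T2" unfolding T2_def using tc_zero[OF in2] by (simp add: zero_prod_def)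
  have cf: "{u. (u, -w) \<in> polar_cone T1} = {H w + adjoint L \<eta> | \<eta>. (\<eta>, - L w) \<in> polar_cone T2}"
    by (rule coder_formula[OF linL R(1) LR Hsym T20 T1eq])
  have r1: "reg_normal_cone (graph_mf (reg_normal_cone A)) (xb, xs0) = polar_cone T1"
    unfolding T1_def by (subst reg_normal_cone_def) (simp add: in1)
  have r2: "reg_normal_cone (graph_mf (reg_normal_cone \<Theta>)) (F xb, \<mu>b) = polar_cone T2"
    unfolding T2_def by (subst reg_normal_cone_def) (simp add: in2)
  have "reg_coderiv (reg_normal_cone A) xb xs0 w = {H w + adjoint L \<eta> | \<eta>. \<eta> \<in> reg_coderiv (reg_normal_cone \<Theta>) (F xb) \<mu>b (L w)}"
    unfolding reg_coderiv_def r1 r2 cf by simp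
  then show ?thesis unfolding H_def L_def xs0_def .
qed

end


lemma adj_compose:
  fixes B :: "'b::euclidean_space \<Rightarrow>\<^sub>L 'c::euclidean_space" and C :: "'a::euclidean_space \<Rightarrow>\<^sub>L 'b"
  shows "adjoint (blinfun_apply (B o\<^sub>L C)) m = adjoint (blinfun_apply C) (adjoint (blinfun_apply B) m)"
proof -
  have "z \<bullet> adjoint (blinfun_apply (B o\<^sub>L C)) m = z \<bullet> adjoint (blinfun_apply C) (adjoint (blinfun_apply B) m)" for z
  proof -
    have "z \<bullet> adjoint (blinfun_apply (B o\<^sub>L C)) m = blinfun_apply (B o\<^sub>L C) z \<bullet> m"
      by (rule adjoint_clauses(1)[OF lin_blinfun])
    also have "\<dots> = blinfun_apply B (blinfun_apply C z) \<bullet> m" by simp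
    also have "\<dots> = blinfun_apply C z \<bullet> adjoint (blinfun_apply B) m"
      by (rule adjoint_clauses(1)[OF lin_blinfun, symmetric])
    also have "\<dots> = z \<bullet> adjoint (blinfun_apply C) (adjoint (blinfun_apply B) m)"
      by (rule adjoint_clauses(1)[OF lin_blinfun, symmetric])
    finally show ?thesis .
  qed
  then show ?thesis by (metis vector_eq_ldot)
qed

lemma adj_add_blinfun:
  fixes B1 B2 :: "'a::euclidean_space \<Rightarrow>\<^sub>L 'b::euclidean_space"
  shows "adjoint (blinfun_apply (B1 + B2)) m = adjoint (blinfun_apply B1) m + adjoint (blinfun_apply B2) m"
proof -
  have "z \<bullet> adjoint (blinfun_apply (B1 + B2)) m = z \<bullet> (adjoint (blinfun_apply B1) m + adjoint (blinfun_apply B2) m)" for z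
  proof -
    have "z \<bullet> adjoint (blinfun_apply (B1 + B2)) m = blinfun_apply (B1 + B2) z \<bullet> m"
      by (rule adjoint_clauses(1)[OF lin_blinfun])
    moreover have "z \<bullet> adjoint (blinfun_apply B1) m = blinfun_apply B1 z \<bullet> m"
      by (rule adjoint_clauses(1)[OF lin_blinfun])
    moreover have "z \<bullet> adjoint (blinfun_apply B2) m = blinfun_apply B2 z \<bullet> m"
      by (rule adjoint_clauses(1)[OF lin_blinfun])
    ultimately show ?thesis by (simp add: inner_add_right inner_add_left blinfun.add_left)
  qed
  then show ?thesis by (metis vector_eq_ldot)
qed

lemma hess_adj: "hess_vec lam D2 w = adjoint (blinfun_apply (blinfun_apply D2 w)) lam"
  unfolding hess_vec_def adj_sum ..

theorem mainTheorem6: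
  fixes g :: "'n::euclidean_space \<Rightarrow> 's::euclidean_space"
    and g' :: "'n \<Rightarrow> ('n \<Rightarrow>\<^sub>L 's)"
    and g'' :: "'n \<Rightarrow> ('n \<Rightarrow>\<^sub>L ('n \<Rightarrow>\<^sub>L 's))"
    and D :: "'s set"
    and h :: "'s \<Rightarrow> 'd::euclidean_space"
    and h' :: "'s \<Rightarrow> ('s \<Rightarrow>\<^sub>L 'd)"
    and h'' :: "'s \<Rightarrow> ('s \<Rightarrow>\<^sub>L ('s \<Rightarrow>\<^sub>L 'd))"
    and \<Theta> :: "'d set"
    and V :: "'s set"
    and xbar :: 'n and xstar :: 'n and lambar :: 's and w :: 'n
  assumes g_d1: "\<And>x. (g has_derivative blinfun_apply (g' x)) (at x)"
    and g_d2: "\<And>x. (g' has_derivative blinfun_apply (g'' x)) (at x)"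
    and g_c2: "continuous_on UNIV g''"
    and D_closed: "closed D"
    and xbar_in: "xbar \<in> g -` D"
    and A1_h_d1: "\<And>z. (h has_derivative blinfun_apply (h' z)) (at z)"
    and A1_h_d2: "\<And>z. (h' has_derivative blinfun_apply (h'' z)) (at z)"
    and A1_h_c2: "continuous_on UNIV h''"
    and A1_Theta: "closed \<Theta>"
    and A1_V: "open V" "g xbar \<in> V"
    and A1_surj: "range (blinfun_apply (h' (g xbar))) = UNIV"
    and A1_D: "D \<inter> V = {z \<in> V. h z \<in> \<Theta>}"
    and A2: "{a + b | a b. a \<in> range (blinfun_apply (g' xbar))
                         \<and> blinfun_apply (h' (g xbar)) b = 0} = UNIV"
    and xstar_normal: "xstar \<in> reg_normal_cone (g -` D) xbar"
    and lam_normal: "lambar \<in> reg_normal_cone D (g xbar)"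
    and lam_mult: "adjoint (blinfun_apply (g' xbar)) lambar = xstar"
  shows "reg_coderiv (reg_normal_cone (g -` D)) xbar xstar w
       = {hess_vec lambar (g'' xbar) w + adjoint (blinfun_apply (g' xbar)) y | y.
            y \<in> reg_coderiv (reg_normal_cone D) (g xbar) lambar (blinfun_apply (g' xbar) w)}"
proof -
  define gb where "gb = g xbar"
  have cg: "isCont g x" for x using has_derivative_continuous[OF g_d1[of x]] by simp
  have cg': "isCont g' x" for x using has_derivative_continuous[OF g_d2[of x]] by simp
  have ch': "isCont h' z" for z using has_derivative_continuous[OF A1_h_d2[of z]] by simp
  have ch'_on: "continuous_on UNIV h'" using ch' by (simp add: continuous_at_imp_continuous_on)
  interpret Dm: subm_set h h' "blinfun_apply (h'' gb)" gb \<Theta> D V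
  proof unfold_locales
    show "\<And>x. (h has_derivative blinfun_apply (h' x)) (at x)" by (rule A1_h_d1)
    show "(h' has_derivative blinfun_apply (h'' gb)) (at gb)" by (rule A1_h_d2)
    show "continuous_on UNIV h'" by (rule ch'_on)
    show "surj (blinfun_apply (h' gb))" using A1_surj unfolding gb_def by simp
    show "open V" by (rule A1_V(1))
    show "gb \<in> V" unfolding gb_def by (rule A1_V(2))
    show "D \<inter> V = {x \<in> V. h x \<in> \<Theta>}" by (rule A1_D)
  qed
  obtain W where W: "gb \<in> W"
    and ncW: "\<And>x. x \<in> W \<Longrightarrow> reg_normal_cone D x = adjoint (blinfun_apply (h' x)) ` reg_normal_cone \<Theta> (h x)"
    by (rule Dm.local_props) blast
  obtain \<mu> where \<mu>: "\<mu> \<in> reg_normal_cone \<Theta> (h gb)" and lam: "lambar = adjoint (blinfun_apply (h' gb)) \<mu>"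
    using lam_normal ncW[OF W] unfolding gb_def by auto
  define F2 where "F2 w = (h' gb o\<^sub>L blinfun_apply (g'' xbar) w) + (blinfun_apply (h'' gb) (blinfun_apply (g' xbar) w) o\<^sub>L g' xbar)" for w
  interpret Gm: subm_set "\<lambda>x. h (g x)" "\<lambda>x. h' (g x) o\<^sub>L g' x" F2 xbar \<Theta> "g -` D" "g -` V"
  proof unfold_locales
    fix x
    have "((\<lambda>x. h (g x)) has_derivative (\<lambda>v. blinfun_apply (h' (g x)) (blinfun_apply (g' x) v))) (at x)"
      by (rule has_derivative_compose[OF g_d1 A1_h_d1])
    moreover have "blinfun_apply (h' (g x) o\<^sub>L g' x) = (\<lambda>v. blinfun_apply (h' (g x)) (blinfun_apply (g' x) v))"
      by (rule ext) simp
    ultimately show "((\<lambda>x. h (g x)) has_derivative blinfun_apply (h' (g x) o\<^sub>L g' x)) (at x)"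
      by simp
  next
    have d1: "((\<lambda>x. h' (g x)) has_derivative (\<lambda>v. blinfun_apply (h'' gb) (blinfun_apply (g' xbar) v))) (at xbar)"
      unfolding gb_def by (rule has_derivative_compose[OF g_d1 A1_h_d2])
    show "((\<lambda>x. h' (g x) o\<^sub>L g' x) has_derivative F2) (at xbar)"
      using bounded_bilinear.FDERIV[OF bounded_bilinear_blinfun_compose d1 g_d2]
      unfolding F2_def gb_def by simp
  next
    have "continuous_on UNIV (\<lambda>x. h' (g x))"
      using ch' cg by (simp add: continuous_at_imp_continuous_on isCont_o2)
    moreover have "continuous_on UNIV g'" using cg' by (simp add: continuous_at_imp_continuous_on)
    ultimately show "continuous_on UNIV (\<lambda>x. h' (g x) o\<^sub>L g' x)"
      by (rule bounded_bilinear.continuous_on[OF bounded_bilinear_blinfun_compose])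
  next
    show "surj (blinfun_apply (h' (g xbar) o\<^sub>L g' xbar))"
      unfolding surj_def
    proof
      fix d :: 'd
      obtain z where z: "blinfun_apply (h' (g xbar)) z = d" using A1_surj by (metis UNIV_I image_iff)
      have "z \<in> {a + b | a b. a \<in> range (blinfun_apply (g' xbar)) \<and> blinfun_apply (h' (g xbar)) b = 0}"
        using A2 by simp
      then obtain u b where ub: "z = blinfun_apply (g' xbar) u + b" "blinfun_apply (h' (g xbar)) b = 0" by blast
      have "blinfun_apply (h' (g xbar) o\<^sub>L g' xbar) u = d"
        using z ub by (simp add: blinfun.add_right)
      then show "\<exists>u. d = blinfun_apply (h' (g xbar) o\<^sub>L g' xbar) u" by metis
    qed
  next
    show "open (g -` V)" using A1_V(1) cg by (intro continuous_open_vimage) (auto simp: continuous_at)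
    show "xbar \<in> g -` V" using A1_V(2) by simp
    show "g -` D \<inter> g -` V = {x \<in> g -` V. h (g x) \<in> \<Theta>}" using A1_D by auto
  qed
  have xs: "xstar = adjoint (blinfun_apply (h' (g xbar) o\<^sub>L g' xbar)) \<mu>"
    using lam_mult lam unfolding gb_def by (simp add: adj_compose)
  have L: "reg_coderiv (reg_normal_cone (g -` D)) xbar xstar w
      = {adjoint (blinfun_apply (F2 w)) \<mu> + adjoint (blinfun_apply (h' (g xbar) o\<^sub>L g' xbar)) \<eta> | \<eta>.
          \<eta> \<in> reg_coderiv (reg_normal_cone \<Theta>) (h (g xbar)) \<mu> (blinfun_apply (h' (g xbar) o\<^sub>L g' xbar) w)}"
    unfolding xs using Gm.sub_coderiv[of \<mu> w] \<mu> unfolding gb_def by simp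
  have R: "reg_coderiv (reg_normal_cone D) gb lambar v
      = {adjoint (blinfun_apply (blinfun_apply (h'' gb) v)) \<mu> + adjoint (blinfun_apply (h' gb)) \<eta> | \<eta>.
          \<eta> \<in> reg_coderiv (reg_normal_cone \<Theta>) (h gb) \<mu> (blinfun_apply (h' gb) v)}" for v
    unfolding lam using Dm.sub_coderiv[OF \<mu>] .
  define G where "G = adjoint (blinfun_apply (g' xbar))"
  have linG: "linear G" unfolding G_def by (rule lin_adj)
  define hv where "hv = hess_vec lambar (g'' xbar) w"
  define M where "M = adjoint (blinfun_apply (blinfun_apply (h'' gb) (blinfun_apply (g' xbar) w))) \<mu>"
  have F2eq: "adjoint (blinfun_apply (F2 w)) \<mu> = hv + G M"
    unfolding F2_def hv_def M_def G_def hess_adj lam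
    by (simp add: adj_add_blinfun adj_compose)
  have comp: "adjoint (blinfun_apply (h' (g xbar) o\<^sub>L g' xbar)) \<eta> = G (adjoint (blinfun_apply (h' gb)) \<eta>)" for \<eta>
    unfolding G_def gb_def by (rule adj_compose)
  define C where "C = reg_coderiv (reg_normal_cone \<Theta>) (h gb) \<mu> (blinfun_apply (h' gb) (blinfun_apply (g' xbar) w))"
  have L': "reg_coderiv (reg_normal_cone (g -` D)) xbar xstar w = {hv + G M + G (adjoint (blinfun_apply (h' gb)) \<eta>) | \<eta>. \<eta> \<in> C}"
  proof -
    have "reg_coderiv (reg_normal_cone (g -` D)) xbar xstar w
      = {adjoint (blinfun_apply (F2 w)) \<mu> + adjoint (blinfun_apply (h' (g xbar) o\<^sub>L g' xbar)) \<eta> | \<eta>. \<eta> \<in> C}"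
      unfolding L C_def gb_def by simp
    also have "\<dots> = {hv + G M + G (adjoint (blinfun_apply (h' gb)) \<eta>) | \<eta>. \<eta> \<in> C}"
      unfolding F2eq comp ..
    finally show ?thesis .
  qed
  have R': "reg_coderiv (reg_normal_cone D) (g xbar) lambar (blinfun_apply (g' xbar) w)
      = {M + adjoint (blinfun_apply (h' gb)) \<eta> | \<eta>. \<eta> \<in> C}"
    unfolding M_def C_def gb_def[symmetric] by (rule R)
  show ?thesis
    unfolding L' R' hv_def[symmetric] G_def[symmetric]
  proof (intro set_eqI iffI)
    fix z assume "z \<in> {hv + G M + G (adjoint (blinfun_apply (h' gb)) \<eta>) | \<eta>. \<eta> \<in> C}"
    then obtain \<eta> where e: "\<eta> \<in> C" "z = hv + G M + G (adjoint (blinfun_apply (h' gb)) \<eta>)" by blast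
    then have "z = hv + G (M + adjoint (blinfun_apply (h' gb)) \<eta>)" by (simp add: linear_add[OF linG] add.assoc)
    then show "z \<in> {hv + G y | y. y \<in> {M + adjoint (blinfun_apply (h' gb)) \<eta> | \<eta>. \<eta> \<in> C}}" using e(1) by blast
  next
    fix z assume "z \<in> {hv + G y | y. y \<in> {M + adjoint (blinfun_apply (h' gb)) \<eta> | \<eta>. \<eta> \<in> C}}"
    then obtain \<eta> where e: "\<eta> \<in> C" "z = hv + G (M + adjoint (blinfun_apply (h' gb)) \<eta>)" by blast
    then have "z = hv + G M + G (adjoint (blinfun_apply (h' gb)) \<eta>)" by (simp add: linear_add[OF linG] add.assoc)
    then show "z \<in> {hv + G M + G (adjoint (blinfun_apply (h' gb)) \<eta>) | \<eta>. \<eta> \<in> C}" using e(1) by blast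
  qed
qed


end
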